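(* In the setting of the augmented system below (with $r=m$, $\phi$ of relative degree $\rho$, $\Omega_g$ invertible everywhere, and $\phi_k(t_0,x_0)<0$ for all $k$), let $\beta>0$, $T>t_0$ and let $\xi:[t_0,T]\to\mathbb{R}^r$ be any measurable function. If the augmented system driven by $w(t)=s_\beta(\xi(t))$ has an absolutely continuous solution $(x(t),\tilde z(t))$ on $[t_0,T]$, then $\phi(t,x(t))\le0$ for all $t\in[t_0,T]$; in particular this holds when $\xi$ is the state of an integrator $\dot\xi=\tilde w$ and the original system is driven by $u(t)=-\Omega_g^{-1}(t,x(t))\big(\Omega_f+D(z(t))s_\beta(\xi(t))\big)$.
   Context: Setting: $f,g$ smooth, original system $\dot x=f(t,x)+g(t,x)u$, time-varying Lie derivatives $L_f^0\psi=\psi$, $L_f^j\psi=\frac{\partial L_f^{j-1}\psi}{\partial x}f+\frac{\partial L_f^{j-1}\psi}{\partial t}$, $L_gL_f^j\psi=\frac{\partial L_f^j\psi}{\partial x}g$. Relative degree $\rho$ of $\phi\in C^\infty([t_0,\infty)\times\mathbb{R}^n,\mathbb{R}^r)$: $L_gL_f^i\phi_k\equiv0$ for $i\le\rho_k-2$ and $L_gL_f^{\rho_k-1}\phi_k\ne0$ everywhere. $\Omega_g$ has $k$-th row $L_gL_f^{\rho_k-1}\phi_k$; $S_{k,i-1}=\tfrac12\sum_{j=1}^{i-1}\binom{i}{j}z_k^{(i-j)}z_k^{(j)}$; $\Omega_f$ has $k$-th entry $S_{k,\rho_k-1}+L_f^{\rho_k}\phi_k$; $D(z)=\mathrm{diag}(z_1,\dots,z_r)$.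 Augmented system: state $(x,\tilde z)$, $\tilde z=(z_k^{(j)})_{k\le r,\,0\le j\le\rho_k-1}$, dynamics $\dot x=f+gu$ with $u=-\Omega_g^{-1}(\Omega_f+D(z)w)$, $\frac{d}{dt}z_k^{(j)}=z_k^{(j+1)}$ ($j\le\rho_k-2$), $\frac{d}{dt}z_k^{(\rho_k-1)}=w_k$; initial conditions $x(t_0)=x_0$, $z_k(t_0)=\sqrt{-2\phi_k(t_0,x_0)}$, $z_k^{(i)}(t_0)=-(L_f^i\phi_k(t_0,x_0)+S_{k,i-1}(t_0))/z_k(t_0)$. The saturation $s_\beta:\mathbb{R}^r\to[-\beta,\beta]^r$ acts componentwise as $s_{\beta,i}(\xi)=2\beta\big(\frac{1}{e^{-\xi_i}+1}-\tfrac12\big)$. *)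

theory Defs
  imports "HOL-Analysis.Analysis"
begin

text \<open>For finite-dimensional
spaces this is exactly C-infinity on S (one-sided derivatives at boundary points).\<close>

coinductive smooth_on :: "'a::real_normed_vector set \<Rightarrow> ('a \<Rightarrow> 'b::real_normed_vector) \<Rightarrow> bool"
  where
  "(\<forall>p\<in>S. h differentiable (at p within S)) \<Longrightarrow>
   (\<forall>v. smooth_on S (\<lambda>p. frechet_derivative h (at p within S) v)) \<Longrightarrow> smooth_on S h"

definition dom_set :: "real \<Rightarrow> (real \<times> (real^'n)) set" where
  "dom_set t0 = {t0..} \<times> UNIV"

text \<open>L_f psi = (d psi / dx) f + d psi / dt, i.e. the derivative of (t,x) |-> psi t x in
the direction (1, f t x).\<close>
definition lie_f :: "real \<Rightarrow> (real \<Rightarrow> real^'n \<Rightarrow> real^'n)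
    \<Rightarrow> (real \<Rightarrow> real^'n \<Rightarrow> real) \<Rightarrow> real \<Rightarrow> real^'n \<Rightarrow> real" where
  "lie_f t0 f \<psi> t x =
     frechet_derivative (\<lambda>p. \<psi> (fst p) (snd p)) (at (t, x) within dom_set t0) (1, f t x)"

definition lie_f_iter :: "real \<Rightarrow> (real \<Rightarrow> real^'n \<Rightarrow> real^'n) \<Rightarrow> nat
    \<Rightarrow> (real \<Rightarrow> real^'n \<Rightarrow> real) \<Rightarrow> real \<Rightarrow> real^'n \<Rightarrow> real" where
  "lie_f_iter t0 f j = (lie_f t0 f ^^ j)"

definition lie_g :: "real \<Rightarrow> (real \<Rightarrow> real^'n \<Rightarrow> real^'m^'n)
    \<Rightarrow> (real \<Rightarrow> real^'n \<Rightarrow> real) \<Rightarrow> real \<Rightarrow> real^'n \<Rightarrow> real^'m" where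
  "lie_g t0 g \<psi> t x = (\<chi> i.
     frechet_derivative (\<lambda>p. \<psi> (fst p) (snd p)) (at (t, x) within dom_set t0) (0, column i (g t x)))"

definition comp_fun :: "(real \<Rightarrow> real^'n \<Rightarrow> real^'m) \<Rightarrow> 'm \<Rightarrow> real \<Rightarrow> real^'n \<Rightarrow> real" where
  "comp_fun \<phi> k t x = \<phi> t x $ k"

definition has_relative_degree :: "real \<Rightarrow> (real \<Rightarrow> real^'n \<Rightarrow> real^'n)
    \<Rightarrow> (real \<Rightarrow> real^'n \<Rightarrow> real^'m^'n) \<Rightarrow> (real \<Rightarrow> real^'n \<Rightarrow> real^'m) \<Rightarrow> ('m \<Rightarrow> nat) \<Rightarrow> bool" where
  "has_relative_degree t0 f g \<phi> \<rho> \<longleftrightarrow>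
     (\<forall>k. 1 \<le> \<rho> k
        \<and> (\<forall>i. i + 2 \<le> \<rho> k \<longrightarrow>
              (\<forall>(t, x) \<in> dom_set t0. lie_g t0 g (lie_f_iter t0 f i (comp_fun \<phi> k)) t x = 0))
        \<and> (\<forall>(t, x) \<in> dom_set t0. lie_g t0 g (lie_f_iter t0 f (\<rho> k - 1) (comp_fun \<phi> k)) t x \<noteq> 0))"

text \<open>The augmented state z~ is represented by zt :: 'm => nat => real, with zt k j = z_k^(j);
only the entries j < rho k are meaningful.\<close>

text \<open>S_sum zt k i = S_{k,i-1} = 1/2 * sum_{j=1}^{i-1} (i choose j) z_k^(i-j) z_k^(j)\<close>
definition S_sum :: "('m \<Rightarrow> nat \<Rightarrow> real) \<Rightarrow> 'm \<Rightarrow> nat \<Rightarrow> real" where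
  "S_sum zt k i = (1/2) * (\<Sum>j\<in>{1..i-1}. real (i choose j) * zt k (i - j) * zt k j)"

definition Omega_g :: "real \<Rightarrow> (real \<Rightarrow> real^'n \<Rightarrow> real^'n) \<Rightarrow> (real \<Rightarrow> real^'n \<Rightarrow> real^'m^'n)
    \<Rightarrow> (real \<Rightarrow> real^'n \<Rightarrow> real^'m) \<Rightarrow> ('m \<Rightarrow> nat) \<Rightarrow> real \<Rightarrow> real^'n \<Rightarrow> real^'m^'m" where
  "Omega_g t0 f g \<phi> \<rho> t x =
     (\<chi> k. lie_g t0 g (lie_f_iter t0 f (\<rho> k - 1) (comp_fun \<phi> k)) t x)"

definition Omega_f :: "real \<Rightarrow> (real \<Rightarrow> real^'n \<Rightarrow> real^'n)
    \<Rightarrow> (real \<Rightarrow> real^'n \<Rightarrow> real^'m) \<Rightarrow> ('m \<Rightarrow> nat) \<Rightarrow> real \<Rightarrow> real^'n \<Rightarrow> ('m \<Rightarrow> nat \<Rightarrow> real) \<Rightarrow> real^'m" where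
  "Omega_f t0 f \<phi> \<rho> t x zt =
     (\<chi> k. S_sum zt k (\<rho> k) + lie_f_iter t0 f (\<rho> k) (comp_fun \<phi> k) t x)"

definition D_mult :: "('m \<Rightarrow> nat \<Rightarrow> real) \<Rightarrow> real^'m \<Rightarrow> real^'m" where
  "D_mult zt w = (\<chi> k. zt k 0 * w $ k)"

definition aug_control :: "real \<Rightarrow> (real \<Rightarrow> real^'n \<Rightarrow> real^'n) \<Rightarrow> (real \<Rightarrow> real^'n \<Rightarrow> real^'m^'n)
    \<Rightarrow> (real \<Rightarrow> real^'n \<Rightarrow> real^'m) \<Rightarrow> ('m \<Rightarrow> nat) \<Rightarrow> real \<Rightarrow> real^'n \<Rightarrow> ('m \<Rightarrow> nat \<Rightarrow> real)
    \<Rightarrow> real^'m \<Rightarrow> real^'m" where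
  "aug_control t0 f g \<phi> \<rho> t x zt w =
     - (matrix_inv (Omega_g t0 f g \<phi> \<rho> t x) *v (Omega_f t0 f \<phi> \<rho> t x zt + D_mult zt w))"

definition sat :: "real \<Rightarrow> real^'m \<Rightarrow> real^'m" where
  "sat \<beta> \<xi> = (\<chi> i. 2 * \<beta> * (1 / (exp (- (\<xi> $ i)) + 1) - 1/2))"

definition abs_continuous_on :: "real set \<Rightarrow> (real \<Rightarrow> 'a::real_normed_vector) \<Rightarrow> bool" where
  "abs_continuous_on I h \<longleftrightarrow>
     (\<forall>\<epsilon>>0. \<exists>\<delta>>0. \<forall>D. finite D
        \<and> (\<forall>(a, b) \<in> D. a \<le> b \<and> {a..b} \<subseteq> I)
        \<and> pairwise (\<lambda>(a, b) (c, d). {a<..<b} \<inter> {c<..<d} = {}) D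
        \<and> (\<Sum>(a, b)\<in>D. b - a) < \<delta>
        \<longrightarrow> (\<Sum>(a, b)\<in>D. norm (h b - h a)) < \<epsilon>)"

definition aug_solution :: "real \<Rightarrow> real \<Rightarrow> (real \<Rightarrow> real^'n \<Rightarrow> real^'n) \<Rightarrow> (real \<Rightarrow> real^'n \<Rightarrow> real^'m^'n)
    \<Rightarrow> (real \<Rightarrow> real^'n \<Rightarrow> real^'m) \<Rightarrow> ('m \<Rightarrow> nat) \<Rightarrow> real^'n \<Rightarrow> (real \<Rightarrow> real^'m)
    \<Rightarrow> (real \<Rightarrow> real^'n) \<Rightarrow> (real \<Rightarrow> 'm \<Rightarrow> nat \<Rightarrow> real) \<Rightarrow> bool" where
  "aug_solution t0 T f g \<phi> \<rho> x0 w x zt \<longleftrightarrow>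
     abs_continuous_on {t0..T} x
     \<and> (\<forall>k j. j < \<rho> k \<longrightarrow> abs_continuous_on {t0..T} (\<lambda>t. zt t k j))
     \<and> (AE t in lebesgue. t \<in> {t0..T} \<longrightarrow>
          (x has_vector_derivative
             (f t (x t) + g t (x t) *v aug_control t0 f g \<phi> \<rho> t (x t) (zt t) (w t)))
             (at t within {t0..T}))
     \<and> (\<forall>k j. j + 1 < \<rho> k \<longrightarrow> (AE t in lebesgue. t \<in> {t0..T} \<longrightarrow>
          ((\<lambda>s. zt s k j) has_vector_derivative zt t k (j + 1)) (at t within {t0..T})))
     \<and> (\<forall>k. AE t in lebesgue. t \<in> {t0..T} \<longrightarrow>
          ((\<lambda>s. zt s k (\<rho> k - 1)) has_vector_derivative w t $ k) (at t within {t0..T}))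
     \<and> x t0 = x0
     \<and> (\<forall>k. zt t0 k 0 = sqrt (- 2 * \<phi> t0 x0 $ k))
     \<and> (\<forall>k i. 1 \<le> i \<and> i < \<rho> k \<longrightarrow>
          zt t0 k i = - (lie_f_iter t0 f i (comp_fun \<phi> k) t0 x0 + S_sum (zt t0) k i) / zt t0 k 0)"

end

theory Submission
  imports Defs
begin

lemma neg_image_deriv0:
  fixes h :: "real \<Rightarrow> real"
  assumes d: "\<And>t. t \<in> S \<Longrightarrow> (h has_vector_derivative 0) (at t within S)"
  shows "negligible (h ` S)"
proof -
  let ?F = "\<lambda>v::real^1. (vec (h (v$1)) :: real^1)"
  have "negligible (?F ` (vec ` S))"
  proof (rule baby_Sard[where f' = "\<lambda>_ _. 0"])
    fix v :: "real^1" assume "v \<in> vec ` S"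
    then obtain t where t: "t \<in> S" "v = vec t" by auto
    have h0: "(h has_derivative (\<lambda>_. 0)) (at t within S)"
      using d[OF t(1)] by (simp add: has_vector_derivative_def)
    have p: "((\<lambda>v::real^1. v$1) has_derivative (\<lambda>v. v$1)) (at v within vec ` S)"
      by (simp add: bounded_linear_vec_nth bounded_linear_imp_has_derivative)
    have "((\<lambda>v::real^1. h (v$1)) has_derivative (\<lambda>_. 0)) (at v within vec ` S)"
      using has_derivative_in_compose2[OF _ _ _ p, of S h "\<lambda>_ _. 0"] h0 d t
      by (auto simp: has_vector_derivative_def image_image)
    then show "(?F has_derivative (\<lambda>_. 0)) (at v within vec ` S)"
      apply -
    proof -
      have bl: "bounded_linear (vec :: real \<Rightarrow> real^1)"
        using linear_linear linear_vec by blast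
      show ?thesis using bounded_linear.has_derivative[OF bl, OF \<open>((\<lambda>v::real^1. h (v$1)) has_derivative (\<lambda>_. 0)) (at v within vec ` S)\<close>] by simp
    qed
  qed (auto simp: matrix_def rank_eq_0 vec_eq_iff)
  moreover have "?F ` (vec ` S) = vec ` (h ` S)" by (auto simp: image_image)
  ultimately have nv: "negligible (vec ` (h ` S) :: (real^1) set)" by simp
  have "negligible ((\<lambda>v::real^1. v$1) ` (vec ` (h ` S)))"
    by (rule negligible_differentiable_image_negligible[OF _ nv])
       (auto intro!: bounded_linear_imp_differentiable_on)
  then show ?thesis by (simp add: image_image)
qed

lemma ac_imp_cont:
  fixes h :: "real \<Rightarrow> 'a::real_normed_vector"
  assumes "abs_continuous_on {a..b} h"
  shows "continuous_on {a..b} h"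
  unfolding continuous_on_iff
proof (intro ballI allI impI)
  fix x e :: real assume x: "x \<in> {a..b}" and e: "e > 0"
  obtain d where d: "d > 0" and H: "\<And>D. finite D
        \<and> (\<forall>(a', b') \<in> D. a' \<le> b' \<and> {a'..b'} \<subseteq> {a..b})
        \<and> pairwise (\<lambda>(a, b) (c, d). {a<..<b} \<inter> {c<..<d} = {}) D
        \<and> (\<Sum>(a, b)\<in>D. b - a) < d
        \<Longrightarrow> (\<Sum>(a, b)\<in>D. norm (h b - h a)) < e"
    using assms e unfolding abs_continuous_on_def by meson
  show "\<exists>d>0. \<forall>x'\<in>{a..b}. dist x' x < d \<longrightarrow> dist (h x') (h x) < e"
  proof (intro exI[of _ d] conjI ballI impI)
    fix x' assume x': "x' \<in> {a..b}" and dx: "dist x' x < d"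
    have "(\<Sum>(a, b)\<in>{(min x x', max x x')}. norm (h b - h a)) < e"
      by (rule H) (use x x' dx in \<open>auto simp: dist_real_def pairwise_def\<close>)
    then show "dist (h x') (h x) < e"
      by (cases "x \<le> x'") (auto simp: dist_norm norm_minus_commute min_def max_def)
  qed (use d in auto)
qed

lemma ac_comb2:
  fixes y1 :: "real \<Rightarrow> 'a::real_normed_vector" and y2 :: "real \<Rightarrow> 'b::real_normed_vector"
    and G :: "real \<Rightarrow> 'c::real_normed_vector"
  assumes a1: "abs_continuous_on I y1" and a2: "abs_continuous_on I y2"
    and L: "\<And>s t. s \<in> I \<Longrightarrow> t \<in> I \<Longrightarrow> norm (G s - G t) \<le> L * (norm (y1 s - y1 t) + norm (y2 s - y2 t))"
  shows "abs_continuous_on I G"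
  unfolding abs_continuous_on_def
proof (intro allI impI)
  fix e :: real assume e: "e > 0"
  define e' where "e' = e / (2 * (\<bar>L\<bar> + 1))"
  have e': "e' > 0" using e by (simp add: e'_def)
  obtain d1 where d1: "d1 > 0" and H1: "\<And>D. finite D
        \<and> (\<forall>(a', b') \<in> D. a' \<le> b' \<and> {a'..b'} \<subseteq> I)
        \<and> pairwise (\<lambda>(a, b) (c, d). {a<..<b} \<inter> {c<..<d} = {}) D
        \<and> (\<Sum>(a, b)\<in>D. b - a) < d1
        \<Longrightarrow> (\<Sum>(a, b)\<in>D. norm (y1 b - y1 a)) < e'"
    using a1 e' unfolding abs_continuous_on_def by meson
  obtain d2 where d2: "d2 > 0" and H2: "\<And>D. finite D
        \<and> (\<forall>(a', b') \<in> D. a' \<le> b' \<and> {a'..b'} \<subseteq> I)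
        \<and> pairwise (\<lambda>(a, b) (c, d). {a<..<b} \<inter> {c<..<d} = {}) D
        \<and> (\<Sum>(a, b)\<in>D. b - a) < d2
        \<Longrightarrow> (\<Sum>(a, b)\<in>D. norm (y2 b - y2 a)) < e'"
    using a2 e' unfolding abs_continuous_on_def by meson
  show "\<exists>d>0. \<forall>D. finite D \<and> (\<forall>(a, b)\<in>D. a \<le> b \<and> {a..b} \<subseteq> I) \<and>
             pairwise (\<lambda>(a, b) (c, d). {a<..<b} \<inter> {c<..<d} = {}) D \<and> (\<Sum>(a, b)\<in>D. b - a) < d \<longrightarrow>
             (\<Sum>(a, b)\<in>D. norm (G b - G a)) < e"
  proof (intro exI[of _ "min d1 d2"] conjI allI impI)
    fix D assume D: "finite D \<and> (\<forall>(a, b)\<in>D. a \<le> b \<and> {a..b} \<subseteq> I) \<and>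
             pairwise (\<lambda>(a, b) (c, d). {a<..<b} \<inter> {c<..<d} = {}) D \<and> (\<Sum>(a, b)\<in>D. b - a) < min d1 d2"
    have s1: "(\<Sum>(a, b)\<in>D. norm (y1 b - y1 a)) < e'" using D by (intro H1) auto
    have s2: "(\<Sum>(a, b)\<in>D. norm (y2 b - y2 a)) < e'" using D by (intro H2) auto
    have "(\<Sum>(a, b)\<in>D. norm (G b - G a)) \<le> (\<Sum>(a, b)\<in>D. \<bar>L\<bar> * (norm (y1 b - y1 a) + norm (y2 b - y2 a)))"
    proof (rule sum_mono)
      fix p assume "p \<in> D"
      then obtain a' b' where p: "p = (a', b')" "a' \<le> b'" "{a'..b'} \<subseteq> I" using D by fastforce
      then have "a' \<in> I" "b' \<in> I" by auto
      then have "norm (G b' - G a') \<le> L * (norm (y1 b' - y1 a') + norm (y2 b' - y2 a'))" using L by blast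
      also have "\<dots> \<le> \<bar>L\<bar> * (norm (y1 b' - y1 a') + norm (y2 b' - y2 a'))"
        by (intro mult_right_mono) auto
      finally show "(case p of (a, b) \<Rightarrow> norm (G b - G a)) \<le> (case p of (a, b) \<Rightarrow> \<bar>L\<bar> * (norm (y1 b - y1 a) + norm (y2 b - y2 a)))"
        using p by simp
    qed
    also have "\<dots> = \<bar>L\<bar> * ((\<Sum>(a, b)\<in>D. norm (y1 b - y1 a)) + (\<Sum>(a, b)\<in>D. norm (y2 b - y2 a)))"
      by (simp add: sum_distrib_left sum.distrib case_prod_unfold distrib_left)
    also have "\<dots> \<le> \<bar>L\<bar> * (2 * e')"
      using s1 s2 by (intro mult_left_mono) auto
    also have "\<dots> < e"
      using e by (simp add: e'_def field_simps)
    finally show "(\<Sum>(a, b)\<in>D. norm (G b - G a)) < e" .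
  qed (use d1 d2 in auto)
qed

lemma ac_const: "abs_continuous_on I (\<lambda>_. c)"
  unfolding abs_continuous_on_def by (auto intro!: exI[of _ 1])

lemma ac_id: "abs_continuous_on I (\<lambda>t. t)"
  unfolding abs_continuous_on_def
proof (intro allI impI)
  fix e :: real assume "e > 0"
  then show "\<exists>d>0. \<forall>D. finite D \<and> (\<forall>(a, b)\<in>D. a \<le> b \<and> {a..b} \<subseteq> I) \<and>
             pairwise (\<lambda>(a, b) (c, d). {a<..<b} \<inter> {c<..<d} = {}) D \<and> (\<Sum>(a, b)\<in>D. b - a) < d \<longrightarrow>
             (\<Sum>(a, b)\<in>D. norm (b - a)) < e"
  proof (intro exI[of _ e] conjI allI impI)
    fix D :: "(real \<times> real) set" assume D: "finite D \<and> (\<forall>(a, b)\<in>D. a \<le> b \<and> {a..b} \<subseteq> I) \<and>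
             pairwise (\<lambda>(a, b) (c, d). {a<..<b} \<inter> {c<..<d} = {}) D \<and> (\<Sum>(a, b)\<in>D. b - a) < e"
    have "(\<Sum>(a, b)\<in>D. norm (b - a)) = (\<Sum>(a, b)\<in>D. b - a)"
      by (rule sum.cong) (use D in auto)
    then show "(\<Sum>(a, b)\<in>D. norm (b - a)) < e" using D by simp
  qed
qed

lemma ac_add:
  fixes f g :: "real \<Rightarrow> 'a::real_normed_vector"
  assumes "abs_continuous_on I f" "abs_continuous_on I g"
  shows "abs_continuous_on I (\<lambda>t. f t + g t)"
proof (rule ac_comb2[OF assms, where L=1])
  fix s t
  have "f s + g s - (f t + g t) = (f s - f t) + (g s - g t)" by simp
  then show "norm (f s + g s - (f t + g t)) \<le> 1 * (norm (f s - f t) + norm (g s - g t))"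
    by (metis mult_1 norm_triangle_ineq)
qed

lemma ac_sum:
  fixes f :: "'i \<Rightarrow> real \<Rightarrow> 'a::real_normed_vector"
  assumes "\<And>i. i \<in> A \<Longrightarrow> abs_continuous_on I (f i)"
  shows "abs_continuous_on I (\<lambda>t. \<Sum>i\<in>A. f i t)"
  using assms
proof (induction A rule: infinite_finite_induct)
  case (infinite A) then show ?case by (simp add: ac_const)
next
  case empty then show ?case by (simp add: ac_const)
next
  case (insert x F)
  then show ?case by (simp add: ac_add)
qed

lemma ac_bounded:
  fixes h :: "real \<Rightarrow> 'a::real_normed_vector"
  assumes "abs_continuous_on {a..b} h"
  obtains M where "M > 0" "\<And>t. t \<in> {a..b} \<Longrightarrow> norm (h t) \<le> M"
proof -
  have "compact (h ` {a..b})"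
    by (rule compact_continuous_image[OF ac_imp_cont[OF assms]]) simp
  then obtain M where "M > 0" "\<forall>x\<in>h ` {a..b}. norm x \<le> M"
    using compact_imp_bounded bounded_pos by metis
  then show ?thesis using that by auto
qed

lemma ac_mult:
  fixes f g :: "real \<Rightarrow> real"
  assumes f: "abs_continuous_on {a..b} f" and g: "abs_continuous_on {a..b} g"
  shows "abs_continuous_on {a..b} (\<lambda>t. f t * g t)"
proof -
  obtain M1 where M1: "M1 > 0" "\<And>t. t \<in> {a..b} \<Longrightarrow> norm (f t) \<le> M1" using ac_bounded[OF f] by blast
  obtain M2 where M2: "M2 > 0" "\<And>t. t \<in> {a..b} \<Longrightarrow> norm (g t) \<le> M2" using ac_bounded[OF g] by blast
  show ?thesis
  proof (rule ac_comb2[OF f g, where L="M1 + M2"])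
    fix s t assume st: "s \<in> {a..b}" "t \<in> {a..b}"
    have eq: "f s * g s - f t * g t = f s * (g s - g t) + g t * (f s - f t)" by (simp add: algebra_simps)
    have "\<bar>f s * (g s - g t)\<bar> \<le> M1 * \<bar>g s - g t\<bar>"
      using M1(2)[OF st(1)] by (simp add: abs_mult mult_right_mono)
    moreover have "\<bar>g t * (f s - f t)\<bar> \<le> M2 * \<bar>f s - f t\<bar>"
      using M2(2)[OF st(2)] by (simp add: abs_mult mult_right_mono)
    moreover have "M1 * \<bar>g s - g t\<bar> + M2 * \<bar>f s - f t\<bar> \<le> (M1 + M2) * (\<bar>f s - f t\<bar> + \<bar>g s - g t\<bar>)"
      using M1 M2 by (simp add: algebra_simps add_mono mult_left_mono)
    ultimately show "norm (f s * g s - f t * g t) \<le> (M1 + M2) * (norm (f s - f t) + norm (g s - g t))"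
      unfolding eq real_norm_def by (smt (verit) abs_triangle_ineq)
  qed
qed

lemma comp_interval_sub:
  fixes C :: "real set"
  assumes C: "C \<in> components U" "open U" and s: "s \<in> closure C" and t: "t \<in> closure C"
  shows "{min s t<..<max s t} \<subseteq> C"
proof -
  have "open C" using C open_components by blast
  have "connected C" using C in_components_connected by blast
  then have cC: "convex C" using is_interval_connected_1 is_interval_convex_1 by blast
  then have "convex (closure C)" by (rule convex_closure)
  then have "closed_segment s t \<subseteq> closure C" using s t closed_segment_subset by blast
  then have "{min s t..max s t} \<subseteq> closure C" by (auto simp: closed_segment_eq_real_ivl min_def max_def split: if_splits)
  then have "{min s t<..<max s t} \<subseteq> closure C" by auto
  then have "{min s t<..<max s t} \<subseteq> interior (closure C)" by (intro interior_maximal) auto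
  also have "\<dots> = C" using convex_interior_closure[OF cC] interior_open[OF \<open>open C\<close>] by simp
  finally show ?thesis .
qed

lemma ac_lusin:
  fixes h :: "real \<Rightarrow> real"
  assumes ac: "abs_continuous_on {a..b} h" and E: "E \<subseteq> {a..b}" "negligible E"
  shows "negligible (h ` E)"
  unfolding negligible_outer_le
proof (intro allI impI)
  fix e :: real assume e: "e > 0"
  obtain d where d: "d > 0" and H: "\<And>D. finite D
        \<and> (\<forall>(a', b') \<in> D. a' \<le> b' \<and> {a'..b'} \<subseteq> {a..b})
        \<and> pairwise (\<lambda>(a, b) (c, d). {a<..<b} \<inter> {c<..<d} = {}) D
        \<and> (\<Sum>(a, b)\<in>D. b - a) < d
        \<Longrightarrow> (\<Sum>(a, b)\<in>D. norm (h b - h a)) < e"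
    using ac e unfolding abs_continuous_on_def by meson
  have hc: "continuous_on {a..b} h" by (rule ac_imp_cont[OF ac])
  have Enull: "E \<in> null_sets lebesgue" using E(2) negligible_iff_null_sets by blast
  then have "E \<in> sets lebesgue" by auto
  then obtain T where T: "open T" "E \<subseteq> T" "(T - E) \<in> lmeasurable" "emeasure lebesgue (T - E) < ennreal d"
    using sets_lebesgue_outer_open d by metis
  have mTE: "measure lebesgue (T - E) < d"
    using T(3,4) by (metis emeasure_eq_measure2 ennreal_less_iff measure_nonneg)
  define U where "U = T \<inter> {a-1<..<b+1}"
  have oU: "open U" using T(1) by (simp add: U_def open_Int)
  have EU: "E \<subseteq> U" using T(2) E(1) by (auto simp: U_def)
  have bU: "bounded U" unfolding U_def by (rule bounded_subset[of "{a-1<..<b+1}"]) auto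
  have lU: "U \<in> lmeasurable" using oU bU lmeasurable_open by blast
  have mU: "measure lebesgue U < d"
  proof -
    have "U \<subseteq> (T - E) \<union> E" using T by (auto simp: U_def)
    moreover have "E \<in> lmeasurable" using E(2) negligible_imp_measurable by blast
    ultimately have "measure lebesgue U \<le> measure lebesgue ((T - E) \<union> E)"
      using T(3) by (intro measure_mono_fmeasurable) (auto simp: lU fmeasurableD intro!: fmeasurable.Un[of "T - E" _ E, simplified])
    also have "\<dots> \<le> measure lebesgue (T - E) + measure lebesgue E"
      using T(3) Enull by (intro measure_Un_le) (auto simp: fmeasurableD)
    also have "measure lebesgue E = 0" using Enull by (simp add: measure_eq_0_null_sets)
    finally show ?thesis using mTE by simp
  qed
  define CC where "CC = {C \<in> components U. C \<inter> {a..b} \<noteq> {}}"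
  define K where "K C = closure C \<inter> {a..b}" for C
  have Kne: "K C \<noteq> {}" if "C \<in> CC" for C using that closure_subset by (auto simp: CC_def K_def)
  have Kc: "compact (K C)" for C
    unfolding K_def by (subst Int_commute) (rule compact_Int_closed, auto)
  have Ksub: "K C \<subseteq> {a..b}" for C by (auto simp: K_def)
  have "\<forall>C\<in>CC. \<exists>st. fst st \<in> K C \<and> snd st \<in> K C \<and> (\<forall>y\<in>K C. h (fst st) \<le> h y \<and> h y \<le> h (snd st))"
  proof
    fix C assume C: "C \<in> CC"
    have hcK: "continuous_on (K C) h" using hc Ksub continuous_on_subset by blast
    obtain s where "s \<in> K C" "\<forall>y\<in>K C. h s \<le> h y" using continuous_attains_inf[OF Kc Kne[OF C] hcK] by blast
    moreover obtain t where "t \<in> K C" "\<forall>y\<in>K C. h y \<le> h t" using continuous_attains_sup[OF Kc Kne[OF C] hcK] by blast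
    ultimately show "\<exists>st. fst st \<in> K C \<and> snd st \<in> K C \<and> (\<forall>y\<in>K C. h (fst st) \<le> h y \<and> h y \<le> h (snd st))"
      by (intro exI[of _ "(s, t)"]) auto
  qed
  then obtain st where st: "\<And>C. C \<in> CC \<Longrightarrow> fst (st C) \<in> K C \<and> snd (st C) \<in> K C \<and> (\<forall>y\<in>K C. h (fst (st C)) \<le> h y \<and> h y \<le> h (snd (st C)))"
    by metis
  define s where "s C = fst (st C)" for C
  define t where "t C = snd (st C)" for C
  have sK: "s C \<in> K C" and tK: "t C \<in> K C" and hst: "\<And>y. y \<in> K C \<Longrightarrow> h (s C) \<le> h y \<and> h y \<le> h (t C)"
    if "C \<in> CC" for C using st[OF that] by (auto simp: s_def t_def)
  define J where "J C = {h (s C) .. h (t C)}" for C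
  have CCsub: "CC \<subseteq> components U" by (auto simp: CC_def)
  have ctbl: "countable CC"
  proof (rule countable_subset[OF CCsub], rule countable_disjoint_open_subsets)
    show "open S" if "S \<in> components U" for S using that oU open_components by blast
    show "pairwise disjnt (components U)"
      using pairwise_disjoint_components[of U] unfolding disjnt_def by simp
  qed
  have sub: "{min (s C) (t C)<..<max (s C) (t C)} \<subseteq> C" if "C \<in> CC" for C
    using comp_interval_sub[of C U "s C" "t C"] that oU sK[OF that] tK[OF that] CCsub by (auto simp: K_def)
  have key: "(\<Sum>C\<in>F. h (t C) - h (s C)) < e" if F: "F \<subseteq> CC" "finite F" for F
  proof -
    define lo where "lo C = min (s C) (t C)" for C
    define hi where "hi C = max (s C) (t C)" for C
    define F' where "F' = {C \<in> F. s C \<noteq> t C}"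
    define D where "D = (\<lambda>C. (lo C, hi C)) ` F'"
    have F'F: "F' \<subseteq> F" by (auto simp: F'_def)
    have finF': "finite F'" using F(2) F'F finite_subset by blast
    have subC: "{lo C<..<hi C} \<subseteq> C" if "C \<in> F" for C using sub F(1) that by (auto simp: lo_def hi_def)
    have lohi: "lo C < hi C" if "C \<in> F'" for C using that by (auto simp: F'_def lo_def hi_def)
    have disj: "C1 \<inter> C2 = {}" if "C1 \<in> F" "C2 \<in> F" "C1 \<noteq> C2" for C1 C2
      using pairwise_disjoint_components that F(1) CCsub unfolding pairwise_def by blast
    have inj: "inj_on (\<lambda>C. (lo C, hi C)) F'"
    proof (rule inj_onI)
      fix C1 C2 assume C: "C1 \<in> F'" "C2 \<in> F'" "(lo C1, hi C1) = (lo C2, hi C2)"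
      then have "(lo C1 + hi C1) / 2 \<in> {lo C1<..<hi C1}" using lohi by auto
      moreover have "{lo C1<..<hi C1} \<subseteq> C1" "{lo C2<..<hi C2} \<subseteq> C2" using subC C(1,2) F'F by blast+
      ultimately have "(lo C1 + hi C1) / 2 \<in> C1 \<inter> C2" using C(3) by auto
      then show "C1 = C2" using disj C F'F by blast
    qed
    have sumD: "(\<Sum>(x, y)\<in>D. y - x) = (\<Sum>C\<in>F'. hi C - lo C)"
      unfolding D_def by (subst sum.reindex[OF inj]) auto
    also have "\<dots> = (\<Sum>C\<in>F'. measure lebesgue {lo C<..<hi C})"
      by (intro sum.cong refl) (simp add: less_imp_le lohi)
    also have "\<dots> = measure lebesgue (\<Union>C\<in>F'. {lo C<..<hi C})"
    proof (rule measure_UNION'[symmetric, OF finF'])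
      show "pairwise (\<lambda>i j. disjnt {lo i<..<hi i} {lo j<..<hi j}) F'"
        unfolding pairwise_def disjnt_def using disj subC F'F by blast
    qed auto
    also have "\<dots> \<le> measure lebesgue U"
    proof (rule measure_mono_fmeasurable)
      show "(\<Union>C\<in>F'. {lo C<..<hi C}) \<subseteq> U" using subC F'F F(1) CCsub in_components_subset by blast
      show "(\<Union>C\<in>F'. {lo C<..<hi C}) \<in> sets lebesgue"
        by (rule sets.finite_UN[OF finF']) auto
    qed (use lU in \<open>auto simp: fmeasurableD\<close>)
    finally have sD: "(\<Sum>(x, y)\<in>D. y - x) < d" using mU by simp
    have "(\<Sum>(x, y)\<in>D. norm (h y - h x)) < e"
    proof (rule H, intro conjI)
      show "finite D" using finF' by (simp add: D_def)
      show "\<forall>(x, y)\<in>D. x \<le> y \<and> {x..y} \<subseteq> {a..b}"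
        unfolding D_def
      proof (intro ballI, clarify)
        fix C assume "C \<in> F'"
        then have "C \<in> CC" using F'F F(1) by blast
        then have "s C \<in> {a..b}" "t C \<in> {a..b}" using sK tK Ksub by blast+
        then show "lo C \<le> hi C \<and> {lo C..hi C} \<subseteq> {a..b}" by (auto simp: lo_def hi_def)
      qed
      show "pairwise (\<lambda>(a, b) (c, d). {a<..<b} \<inter> {c<..<d} = {}) D"
      proof (rule pairwiseI)
        fix p q assume p: "p \<in> D" and q: "q \<in> D" and pq: "p \<noteq> q"
        obtain C1 where C1: "C1 \<in> F'" "p = (lo C1, hi C1)" using p D_def by auto
        obtain C2 where C2: "C2 \<in> F'" "q = (lo C2, hi C2)" using q D_def by auto
        have "C1 \<noteq> C2" using pq C1 C2 by auto
        moreover have "{lo C1<..<hi C1} \<subseteq> C1" "{lo C2<..<hi C2} \<subseteq> C2" using subC C1 C2 F'F by blast+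
        ultimately have "{lo C1<..<hi C1} \<inter> {lo C2<..<hi C2} = {}" using disj C1 C2 F'F by blast
        then show "(\<lambda>(a, b) (c, d). {a<..<b} \<inter> {c<..<d} = {}) p q" using C1 C2 by simp
      qed
    qed (use sD in simp)
    moreover have "(\<Sum>(x, y)\<in>D. norm (h y - h x)) = (\<Sum>C\<in>F'. norm (h (hi C) - h (lo C)))"
      unfolding D_def by (subst sum.reindex[OF inj]) auto
    moreover have "\<dots> = (\<Sum>C\<in>F'. h (t C) - h (s C))"
    proof (rule sum.cong)
      fix C assume C: "C \<in> F'"
      then have "C \<in> CC" using F'F F(1) by auto
      then have "h (s C) \<le> h (t C)" using hst tK by blast
      then show "norm (h (hi C) - h (lo C)) = h (t C) - h (s C)"
        by (auto simp: hi_def lo_def min_def max_def)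
    qed simp
    moreover have "(\<Sum>C\<in>F'. h (t C) - h (s C)) = (\<Sum>C\<in>F. h (t C) - h (s C))"
      by (rule sum.mono_neutral_left) (auto simp: F'_def F(2))
    ultimately show ?thesis by simp
  qed
  show "\<exists>T. h ` E \<subseteq> T \<and> T \<in> lmeasurable \<and> measure lebesgue T \<le> e"
  proof (intro exI conjI)
    have bnd: "measure lebesgue (\<Union>C\<in>F. J C) \<le> e" if "F \<subseteq> CC" "finite F" for F
    proof -
      have "measure lebesgue (\<Union>C\<in>F. J C) \<le> (\<Sum>C\<in>F. measure lebesgue (J C))"
        using that by (intro measure_UNION_le) (auto simp: J_def)
      also have "\<dots> = (\<Sum>C\<in>F. h (t C) - h (s C))"
      proof (rule sum.cong)
        fix C assume "C \<in> F"
        then have "C \<in> CC" using that by auto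
        then have "h (s C) \<le> h (t C)" using hst tK by blast
        then show "measure lebesgue (J C) = h (t C) - h (s C)" by (simp add: J_def)
      qed simp
      also have "\<dots> \<le> e" using key[OF that] by simp
      finally show ?thesis .
    qed
    show "(\<Union>C\<in>CC. J C) \<in> lmeasurable"
      by (rule fmeasurable_UN_bound[OF ctbl _ bnd]) (auto simp: J_def)
    show "measure lebesgue (\<Union>C\<in>CC. J C) \<le> e"
      by (rule measure_UN_bound[OF ctbl _ bnd]) (auto simp: J_def)
    show "h ` E \<subseteq> (\<Union>C\<in>CC. J C)"
    proof
      fix y assume "y \<in> h ` E"
      then obtain x where x: "x \<in> E" "y = h x" by auto
      let ?C = "connected_component_set U x"
      have xU: "x \<in> U" using x EU by auto
      have "?C \<in> components U" using componentsI[OF xU] .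
      moreover have "x \<in> ?C" using xU by simp
      moreover have "x \<in> {a..b}" using x E(1) by blast
      ultimately have C: "?C \<in> CC" unfolding CC_def by blast
      have "x \<in> closure ?C" using \<open>x \<in> ?C\<close> closure_subset by blast
      then have "x \<in> K ?C" using \<open>x \<in> {a..b}\<close> by (auto simp: K_def)
      then have "y \<in> J ?C" using hst[OF C] x by (auto simp: J_def)
      then show "y \<in> (\<Union>C\<in>CC. J C)" using C by blast
    qed
  qed
qed

lemma ac_deriv0_const:
  fixes h :: "real \<Rightarrow> real"
  assumes ac: "abs_continuous_on {a..b} h"
    and ae: "AE t in lebesgue. t \<in> {a..b} \<longrightarrow> (h has_vector_derivative 0) (at t within {a..b})"
    and c: "c \<in> {a..b}"
  shows "h c = h a"
proof -
  obtain N where N: "\<And>t. t \<in> space lebesgue - N \<Longrightarrow> t \<in> {a..b} \<longrightarrow> (h has_vector_derivative 0) (at t within {a..b})"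
    "N \<in> null_sets lebesgue"
    using AE_E3[OF ae] by metis
  define G where "G = {a..b} - N"
  have "negligible (h ` G)"
  proof (rule neg_image_deriv0)
    fix t assume t: "t \<in> G"
    then have "(h has_vector_derivative 0) (at t within {a..b})" using N(1)[of t] by (auto simp: G_def)
    then show "(h has_vector_derivative 0) (at t within G)"
      by (rule has_vector_derivative_within_subset) (auto simp: G_def)
  qed
  moreover have "negligible (h ` ({a..b} \<inter> N))"
  proof (rule ac_lusin[OF ac])
    show "negligible ({a..b} \<inter> N)"
    proof (rule negligible_subset)
      show "negligible N" using N(2) by (simp add: negligible_iff_null_sets)
    qed auto
  qed auto
  moreover have "h ` {a..b} = h ` G \<union> h ` ({a..b} \<inter> N)" by (auto simp: G_def)
  ultimately have neg: "negligible (h ` {a..b})" by (simp only: negligible_Un_eq)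
  have "connected (h ` {a..b})"
    by (rule connected_continuous_image[OF ac_imp_cont[OF ac]]) simp
  then have iv: "is_interval (h ` {a..b})" using is_interval_connected_1 by blast
  have a: "a \<in> {a..b}" using c by auto
  have "{min (h a) (h c)..max (h a) (h c)} \<subseteq> h ` {a..b}"
  proof
    fix y assume "y \<in> {min (h a) (h c)..max (h a) (h c)}"
    then have y: "min (h a) (h c) \<le> y" "y \<le> max (h a) (h c)" by auto
    have "h a \<in> h ` {a..b}" "h c \<in> h ` {a..b}" using a c by auto
    then have "min (h a) (h c) \<in> h ` {a..b}" "max (h a) (h c) \<in> h ` {a..b}"
      by (simp_all add: min_def max_def)
    then show "y \<in> h ` {a..b}"
      using iv[unfolded is_interval_1] y by blast
  qed
  then have "negligible {min (h a) (h c)..max (h a) (h c)}" using neg negligible_subset by blast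
  then have "box (min (h a) (h c)) (max (h a) (h c)) = {}"
    using negligible_interval(1)[of "min (h a) (h c)" "max (h a) (h c)"] by (simp add: cbox_interval)
  then have "\<not> min (h a) (h c) < max (h a) (h c)" by (simp add: box_real)
  then show ?thesis by (simp add: min_def max_def split: if_splits)
qed

definition ud :: "'a::euclidean_space set \<Rightarrow> bool" where
  "ud S \<longleftrightarrow> (\<forall>x\<in>S. \<forall>i\<in>Basis. \<forall>e>0. \<exists>d. 0 < \<bar>d\<bar> \<and> \<bar>d\<bar> < e \<and> x + d *\<^sub>R i \<in> S)"

lemma fd_eq:
  assumes "ud S" "x \<in> S" "(f has_derivative f') (at x within S)"
  shows "frechet_derivative f (at x within S) = f'"
proof -
  have "f differentiable (at x within S)" using assms(3) by (auto simp: differentiable_def)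
  then have "(f has_derivative frechet_derivative f (at x within S)) (at x within S)"
    using frechet_derivative_works by blast
  then show ?thesis
    by (rule frechet_derivative_unique_within[OF _ assms(3)]) (use assms(1,2) in \<open>auto simp: ud_def\<close>)
qed

lemma fd_works:
  assumes "f differentiable (at x within S)"
  shows "(f has_derivative frechet_derivative f (at x within S)) (at x within S)"
  using assms frechet_derivative_works by blast

fun Ck :: "nat \<Rightarrow> 'a::euclidean_space set \<Rightarrow> ('a \<Rightarrow> 'b::real_normed_vector) \<Rightarrow> bool" where
  "Ck 0 S h = continuous_on S h"
| "Ck (Suc k) S h = ((\<forall>p\<in>S. h differentiable (at p within S)) \<and>
      (\<forall>v. Ck k S (\<lambda>p. frechet_derivative h (at p within S) v)))"

lemma Ck_cont: "Ck k S h \<Longrightarrow> continuous_on S h"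
  by (cases k) (auto simp: continuous_on_eq_continuous_within differentiable_imp_continuous_within)

lemma Ck_mono: "Ck (Suc k) S h \<Longrightarrow> Ck k S h"
proof (induction k arbitrary: h)
  case 0 then show ?case by (auto simp: continuous_on_eq_continuous_within differentiable_imp_continuous_within)
next
  case (Suc k) then show ?case by auto
qed

lemma Ck_cong:
  assumes "ud S" "\<And>p. p \<in> S \<Longrightarrow> h p = h' p" "Ck k S h"
  shows "Ck k S h'"
  using assms(2,3)
proof (induction k arbitrary: h h')
  case 0 then show ?case using continuous_on_cong by (metis Ck.simps(1))
next
  case (Suc k)
  have dh: "(h has_derivative frechet_derivative h (at p within S)) (at p within S)" if "p \<in> S" for p
    using Suc.prems(2) that fd_works by auto
  have dh': "(h' has_derivative frechet_derivative h (at p within S)) (at p within S)" if "p \<in> S" for p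
    using has_derivative_transform[OF that _ dh[OF that]] Suc.prems(1) by metis
  have eq: "frechet_derivative h' (at p within S) = frechet_derivative h (at p within S)" if "p \<in> S" for p
    using fd_eq[OF assms(1) that dh'[OF that]] .
  show ?case
  proof (simp only: Ck.simps, intro conjI ballI allI)
    show "h' differentiable (at p within S)" if "p \<in> S" for p using dh'[OF that] by (auto simp: differentiable_def)
    fix v
    show "Ck k S (\<lambda>p. frechet_derivative h' (at p within S) v)"
      by (rule Suc.IH[of "\<lambda>p. frechet_derivative h (at p within S) v"]) (use eq Suc.prems(2) in auto)
  qed
qed

lemma Ck_smooth: "smooth_on S h \<Longrightarrow> Ck k S h"
proof (induction k arbitrary: h)
  case 0
  then show ?case
    by (cases rule: smooth_on.cases) (auto simp: continuous_on_eq_continuous_within differentiable_imp_continuous_within)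
next
  case (Suc k)
  from Suc.prems show ?case
  proof (cases rule: smooth_on.cases)
    case 1 then show ?thesis using Suc.IH by auto
  qed
qed

lemma Ck_linear:
  assumes "ud S" "bounded_linear L" "Ck k S h"
  shows "Ck k S (\<lambda>p. L (h p))"
  using assms(3)
proof (induction k arbitrary: h)
  case 0 then show ?case
    using assms(2) by (auto intro: continuous_on_compose2[of UNIV L] linear_continuous_on)
next
  case (Suc k)
  have dh: "((\<lambda>p. L (h p)) has_derivative (\<lambda>v. L (frechet_derivative h (at p within S) v))) (at p within S)"
    if "p \<in> S" for p
  proof -
    have "h differentiable (at p within S)" using Suc.prems that by auto
    then show ?thesis by (rule bounded_linear.has_derivative[OF assms(2) fd_works])
  qed
  show ?case
  proof (simp only: Ck.simps, intro conjI ballI allI)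
    show "(\<lambda>p. L (h p)) differentiable (at p within S)" if "p \<in> S" for p using dh[OF that] by (auto simp: differentiable_def)
    fix v
    have "Ck k S (\<lambda>p. L (frechet_derivative h (at p within S) v))" using Suc by auto
    then show "Ck k S (\<lambda>p. frechet_derivative (\<lambda>p. L (h p)) (at p within S) v)"
      by (rule Ck_cong[OF assms(1), rotated]) (simp add: fd_eq[OF assms(1) _ dh])
  qed
qed

lemma Ck_const: "ud S \<Longrightarrow> Ck k S (\<lambda>p. c)"
proof (induction k arbitrary: c)
  case 0 then show ?case by simp
next
  case (Suc k)
  have "Ck k S (\<lambda>p. frechet_derivative (\<lambda>p. c) (at p within S) v)" for v
    by (rule Ck_cong[OF Suc.prems _ Suc.IH[OF Suc.prems, of 0]]) (simp add: fd_eq[OF Suc.prems _ has_derivative_const])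
  then show ?case by simp
qed

lemma Ck_add:
  fixes f g :: "'a::euclidean_space \<Rightarrow> 'b::real_normed_vector"
  assumes "ud S" "Ck k S f" "Ck k S g"
  shows "Ck k S (\<lambda>p. f p + g p)"
  using assms(2,3)
proof (induction k arbitrary: f g)
  case 0 then show ?case by (auto intro: continuous_on_add)
next
  case (Suc k)
  have dh: "((\<lambda>p. f p + g p) has_derivative (\<lambda>v. frechet_derivative f (at p within S) v + frechet_derivative g (at p within S) v)) (at p within S)"
    if "p \<in> S" for p
  proof -
    have "f differentiable (at p within S)" "g differentiable (at p within S)" using Suc.prems that by auto
    then show ?thesis by (rule has_derivative_add[OF fd_works fd_works])
  qed
  show ?case
  proof (simp only: Ck.simps, intro conjI ballI allI)
    show "(\<lambda>p. f p + g p) differentiable (at p within S)" if "p \<in> S" for p using dh[OF that] by (auto simp: differentiable_def)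
    fix v
    have "Ck k S (\<lambda>p. frechet_derivative f (at p within S) v + frechet_derivative g (at p within S) v)"
      using Suc by auto
    then show "Ck k S (\<lambda>p. frechet_derivative (\<lambda>p. f p + g p) (at p within S) v)"
      by (rule Ck_cong[OF assms(1), rotated]) (simp add: fd_eq[OF assms(1) _ dh])
  qed
qed

lemma Ck_sum:
  fixes f :: "'i \<Rightarrow> 'a::euclidean_space \<Rightarrow> 'b::real_normed_vector"
  assumes "ud S" "\<And>i. i \<in> A \<Longrightarrow> Ck k S (f i)"
  shows "Ck k S (\<lambda>p. \<Sum>i\<in>A. f i p)"
  using assms(2)
proof (induction A rule: infinite_finite_induct)
  case (infinite A) then show ?case using Ck_const[OF assms(1)] by simp
next
  case empty then show ?case using Ck_const[OF assms(1)] by simp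
next
  case (insert x F)
  then show ?case using Ck_add[OF assms(1), of k "f x" "\<lambda>p. \<Sum>i\<in>F. f i p"] by simp
qed

lemma Ck_mult:
  fixes f g :: "'a::euclidean_space \<Rightarrow> real"
  assumes "ud S" "Ck k S f" "Ck k S g"
  shows "Ck k S (\<lambda>p. f p * g p)"
  using assms(2,3)
proof (induction k arbitrary: f g)
  case 0 then show ?case by (auto intro: continuous_on_mult)
next
  case (Suc k)
  have dh: "((\<lambda>p. f p * g p) has_derivative (\<lambda>v. f p * frechet_derivative g (at p within S) v + frechet_derivative f (at p within S) v * g p)) (at p within S)"
    if "p \<in> S" for p
  proof -
    have "f differentiable (at p within S)" "g differentiable (at p within S)" using Suc.prems that by auto
    then show ?thesis by (rule has_derivative_mult[OF fd_works fd_works])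
  qed
  show ?case
  proof (simp only: Ck.simps, intro conjI ballI allI)
    show "(\<lambda>p. f p * g p) differentiable (at p within S)" if "p \<in> S" for p using dh[OF that] by (auto simp: differentiable_def)
    fix v
    have f: "Ck k S f" and g: "Ck k S g" using Suc.prems Ck_mono by blast+
    have "Ck k S (\<lambda>p. f p * frechet_derivative g (at p within S) v + frechet_derivative f (at p within S) v * g p)"
      using Suc f g by (intro Ck_add[OF assms(1)]) auto
    then show "Ck k S (\<lambda>p. frechet_derivative (\<lambda>p. f p * g p) (at p within S) v)"
      by (rule Ck_cong[OF assms(1), rotated]) (simp add: fd_eq[OF assms(1) _ dh])
  qed
qed

lemma pair_expansion: fixes y :: "real^'n"
  shows "(1::real, y) = (1, 0) + (\<Sum>j\<in>UNIV. y $ j *\<^sub>R (0::real, axis j (1::real)))"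
proof -
  have "(\<Sum>j\<in>UNIV. y $ j *\<^sub>R (0::real, axis j (1::real))) = (0, \<Sum>j\<in>UNIV. y $ j *\<^sub>R axis j 1)"
    by (simp add: prod_eq_iff fst_sum snd_sum)
  also have "(\<Sum>j\<in>UNIV. y $ j *\<^sub>R axis j 1) = y"
    using basis_expansion[of y] by (simp add: scalar_mult_eq_scaleR)
  finally show ?thesis by simp
qed


lemma Ck_lie:
  fixes \<psi> :: "real \<times> (real^'n) \<Rightarrow> real" and F :: "real \<times> (real^'n) \<Rightarrow> real^'n"
  assumes S: "ud S" and psi: "Ck (Suc k) S \<psi>" and F: "\<And>j. Ck k S (\<lambda>p. F p $ j)"
  shows "Ck k S (\<lambda>p. frechet_derivative \<psi> (at p within S) (1, F p))"
proof -
  have eq: "frechet_derivative \<psi> (at p within S) (1, F p) =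
      frechet_derivative \<psi> (at p within S) (1, 0) + (\<Sum>j\<in>UNIV. F p $ j * frechet_derivative \<psi> (at p within S) (0, axis j 1))"
    if "p \<in> S" for p
  proof -
    have bl: "bounded_linear (frechet_derivative \<psi> (at p within S))"
    proof -
      have "\<psi> differentiable (at p within S)" using psi that by auto
      then show ?thesis using fd_works has_derivative_bounded_linear by blast
    qed
    have "(1::real, F p) = (1, 0) + (\<Sum>j\<in>UNIV. F p $ j *\<^sub>R (0::real, axis j (1::real)))"
      by (rule pair_expansion)
    then show ?thesis
      using bounded_linear.linear[OF bl] by (simp only: linear_add linear_sum linear_scale real_scaleR_def)
  qed
  have "Ck k S (\<lambda>p. frechet_derivative \<psi> (at p within S) (1, 0) + (\<Sum>j\<in>UNIV. F p $ j * frechet_derivative \<psi> (at p within S) (0, axis j 1)))"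
  proof (rule Ck_add[OF S])
    show "Ck k S (\<lambda>p. frechet_derivative \<psi> (at p within S) (1, 0))" using psi by simp
    show "Ck k S (\<lambda>p. \<Sum>j\<in>UNIV. F p $ j * frechet_derivative \<psi> (at p within S) (0, axis j 1))"
    proof (rule Ck_sum[OF S])
      fix j :: 'n
      show "Ck k S (\<lambda>p. F p $ j * frechet_derivative \<psi> (at p within S) (0, axis j 1))"
        by (rule Ck_mult[OF S F]) (use psi in simp)
    qed
  qed
  then show ?thesis
    by (rule Ck_cong[OF S, rotated]) (simp add: eq)
qed

lemma ud_dom: "ud (dom_set t0 :: (real \<times> (real^'n)) set)"
  unfolding ud_def
proof (intro ballI allI impI)
  fix x :: "real \<times> (real^'n)" and i :: "real \<times> (real^'n)" and e :: real
  assume x: "x \<in> dom_set t0" and i: "i \<in> Basis" and e: "e > 0"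
  have "fst i \<ge> 0" using i by (auto simp: Basis_prod_def)
  moreover have "t0 \<le> fst x" using x by (auto simp: dom_set_def)
  ultimately have "t0 \<le> fst x + (e/2) * fst i" using e by (meson add_increasing2 divide_nonneg_pos less_imp_le mult_nonneg_nonneg zero_less_numeral)
  then have "x + (e/2) *\<^sub>R i \<in> dom_set t0" by (simp add: dom_set_def mem_Times_iff)
  then show "\<exists>d. 0 < \<bar>d\<bar> \<and> \<bar>d\<bar> < e \<and> x + d *\<^sub>R i \<in> dom_set t0"
    using e by (intro exI[of _ "e/2"]) auto
qed

lemma Ck_lie_iter:
  fixes f :: "real \<Rightarrow> real^'n \<Rightarrow> real^'n" and \<psi> :: "real \<Rightarrow> real^'n \<Rightarrow> real"
  assumes psi: "\<And>k. Ck k (dom_set t0) (\<lambda>p. \<psi> (fst p) (snd p))"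
    and f: "\<And>k j. Ck k (dom_set t0) (\<lambda>p. f (fst p) (snd p) $ j)"
  shows "Ck k (dom_set t0) (\<lambda>p. lie_f_iter t0 f i \<psi> (fst p) (snd p))"
proof (induction i arbitrary: k)
  case 0 then show ?case using psi by (simp add: lie_f_iter_def)
next
  case (Suc i)
  have "Ck k (dom_set t0) (\<lambda>p. frechet_derivative (\<lambda>p. lie_f_iter t0 f i \<psi> (fst p) (snd p)) (at p within dom_set t0) (1, f (fst p) (snd p)))"
    by (rule Ck_lie[OF ud_dom Suc.IH f])
  then show ?case by (simp add: lie_f_iter_def lie_f_def)
qed

lemma ac_comp:
  fixes \<psi> :: "real \<times> (real^'n) \<Rightarrow> real" and x :: "real \<Rightarrow> real^'n"
  assumes psi: "Ck (Suc 0) (dom_set t0) \<psi>" and ac: "abs_continuous_on {t0..T} x"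
  shows "abs_continuous_on {t0..T} (\<lambda>t. \<psi> (t, x t))"
proof -
  obtain R where R: "R > 0" "\<And>t. t \<in> {t0..T} \<Longrightarrow> norm (x t) \<le> R" using ac_bounded[OF ac] by blast
  define K where "K = {t0..T} \<times> cball (0::real^'n) R"
  have cK: "convex K" by (simp add: K_def convex_Times)
  have kK: "compact K" by (simp add: K_def compact_Times)
  have KS: "K \<subseteq> dom_set t0" by (auto simp: K_def dom_set_def)
  let ?D = "\<lambda>p. frechet_derivative \<psi> (at p within dom_set t0)"
  have der: "(\<psi> has_derivative ?D p) (at p within K)" if "p \<in> K" for p
  proof -
    have "\<psi> differentiable (at p within dom_set t0)" using psi that KS by auto
    then show ?thesis using fd_works has_derivative_subset KS by blast
  qed
  have cont: "continuous_on K (\<lambda>p. \<Sum>b\<in>Basis. \<bar>?D p b\<bar>)"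
  proof (intro continuous_intros)
    fix b :: "real \<times> (real^'n)"
    have "Ck 0 (dom_set t0) (\<lambda>p. ?D p b)" using psi unfolding Ck.simps(2) by blast
    then have "continuous_on (dom_set t0) (\<lambda>p. ?D p b)" by (simp only: Ck.simps(1))
    then show "continuous_on K (\<lambda>p. ?D p b)" using continuous_on_subset KS by blast
  qed
  obtain M where M: "\<And>p. p \<in> K \<Longrightarrow> norm (\<Sum>b\<in>Basis. \<bar>?D p b\<bar>) \<le> M"
    using compact_imp_bounded[OF compact_continuous_image[OF cont kK]] unfolding bounded_iff by auto
  have onorm: "onorm (?D p) \<le> M" if "p \<in> K" for p
  proof (rule onorm_le)
    fix v :: "real \<times> (real^'n)"
    have bl: "bounded_linear (?D p)" using der[OF that] has_derivative_bounded_linear by blast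
    have "?D p v = ?D p (\<Sum>b\<in>Basis. (v \<bullet> b) *\<^sub>R b)" by (simp add: euclidean_representation)
    also have "\<dots> = (\<Sum>b\<in>Basis. (v \<bullet> b) * ?D p b)"
      using bounded_linear.linear[OF bl] by (simp add: linear_sum linear_scale)
    finally have "norm (?D p v) \<le> (\<Sum>b\<in>Basis. \<bar>v \<bullet> b\<bar> * \<bar>?D p b\<bar>)"
      by (simp add: sum_abs[THEN order_trans] abs_mult)
    also have "\<dots> \<le> (\<Sum>b\<in>Basis. norm v * \<bar>?D p b\<bar>)"
      by (intro sum_mono mult_right_mono) (auto simp: Basis_le_norm)
    also have "\<dots> = norm v * (\<Sum>b\<in>Basis. \<bar>?D p b\<bar>)" by (simp add: sum_distrib_left)
    also have "\<dots> \<le> norm v * M" using M[OF that] by (intro mult_left_mono) auto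
    finally show "norm (?D p v) \<le> M * norm v" by (simp add: mult.commute)
  qed
  show ?thesis
  proof (rule ac_comb2[OF ac ac_id, where L = "\<bar>M\<bar>"])
    fix s t assume st: "s \<in> {t0..T}" "t \<in> {t0..T}"
    have "(s, x s) \<in> K" "(t, x t) \<in> K" using st R by (auto simp: K_def)
    then have "norm (\<psi> (s, x s) - \<psi> (t, x t)) \<le> M * norm ((s, x s) - (t, x t))"
      by (intro differentiable_bound[OF cK der onorm])
    also have "\<dots> \<le> \<bar>M\<bar> * norm ((s, x s) - (t, x t))" by (intro mult_right_mono) auto
    finally have A: "norm (\<psi> (s, x s) - \<psi> (t, x t)) \<le> \<bar>M\<bar> * norm ((s, x s) - (t, x t))" .
    have B: "norm ((s, x s) - (t, x t)) \<le> norm (x s - x t) + norm (s - t)"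
      using norm_Pair_le[of "s - t" "x s - x t"] by simp
    show "norm (\<psi> (s, x s) - \<psi> (t, x t)) \<le> \<bar>M\<bar> * (norm (x s - x t) + norm (s - t))"
      by (meson A B abs_ge_zero mult_left_mono order_trans)
  qed
qed

lemma chain_pt:
  fixes \<psi> :: "real \<times> (real^'n) \<Rightarrow> real" and x :: "real \<Rightarrow> real^'n"
  assumes psi: "\<psi> differentiable (at (t, x t) within dom_set t0)"
    and xd: "(x has_vector_derivative x') (at t within {t0..T})" and t: "t \<in> {t0..T}"
  shows "((\<lambda>s. \<psi> (s, x s)) has_real_derivative frechet_derivative \<psi> (at (t, x t) within dom_set t0) (1, x')) (at t within {t0..T})"
proof -
  let ?D = "frechet_derivative \<psi> (at (t, x t) within dom_set t0)"
  have bl: "bounded_linear ?D" using fd_works[OF psi] has_derivative_bounded_linear by blast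
  have p: "((\<lambda>s. (s, x s)) has_derivative (\<lambda>h. (h, h *\<^sub>R x'))) (at t within {t0..T})"
    using has_derivative_Pair[OF has_derivative_ident xd[unfolded has_vector_derivative_def]] by simp
  have "((\<lambda>s. \<psi> (s, x s)) has_derivative (\<lambda>h. ?D (h, h *\<^sub>R x'))) (at t within {t0..T})"
  proof (rule has_derivative_in_compose[OF p])
    have "(\<psi> has_derivative ?D) (at (t, x t) within dom_set t0)" by (rule fd_works[OF psi])
    then show "(\<psi> has_derivative ?D) (at (t, x t) within (\<lambda>s. (s, x s)) ` {t0..T})"
      by (rule has_derivative_subset) (auto simp: dom_set_def)
  qed
  moreover have "(\<lambda>h. ?D (h, h *\<^sub>R x')) = (\<lambda>h. ?D (1, x') * h)"
  proof
    fix h :: real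
    have "(h, h *\<^sub>R x') = h *\<^sub>R (1, x')" by simp
    then show "?D (h, h *\<^sub>R x') = ?D (1, x') * h"
      using linear_scale[OF bounded_linear.linear[OF bl], of h "(1, x')"] by simp
  qed
  ultimately show ?thesis by (simp add: has_field_derivative_def)
qed

definition Pq :: "nat \<Rightarrow> (nat \<Rightarrow> real) \<Rightarrow> real" where
  "Pq i c = (1/2) * (\<Sum>j\<le>i. real (i choose j) * c (i - j) * c j)"

lemma leibniz:
  "(\<Sum>j\<le>i. real (i choose j) * (b (Suc i - j) * b j + b (i - j) * b (Suc j))) =
   (\<Sum>j\<le>Suc i. real (Suc i choose j) * b (Suc i - j) * b j)"
proof -
  have A: "(\<Sum>j\<le>i. real (i choose j) * b (Suc i - j) * b j) =
        b (Suc i) * b 0 + (\<Sum>j\<le>i. real (i choose Suc j) * b (i - j) * b (Suc j))"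
  proof -
    have "(\<Sum>j\<le>i. real (i choose j) * b (Suc i - j) * b j) = (\<Sum>j\<le>Suc i. real (i choose j) * b (Suc i - j) * b j)"
      by simp
    also have "\<dots> = b (Suc i) * b 0 + (\<Sum>j\<le>i. real (i choose Suc j) * b (Suc i - Suc j) * b (Suc j))"
      by (subst sum.atMost_Suc_shift) simp
    finally show ?thesis by simp
  qed
  have B: "(\<Sum>j\<le>Suc i. real (Suc i choose j) * b (Suc i - j) * b j) =
       b (Suc i) * b 0 + (\<Sum>j\<le>i. (real (i choose j) + real (i choose Suc j)) * b (i - j) * b (Suc j))"
    by (subst sum.atMost_Suc_shift) simp
  have L: "(\<Sum>j\<le>i. real (i choose j) * (b (Suc i - j) * b j + b (i - j) * b (Suc j))) =
     (\<Sum>j\<le>i. real (i choose j) * b (Suc i - j) * b j) + (\<Sum>j\<le>i. real (i choose j) * b (i - j) * b (Suc j))"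
    by (simp add: distrib_left sum.distrib mult.assoc)
  have R: "(\<Sum>j\<le>i. (real (i choose j) + real (i choose Suc j)) * b (i - j) * b (Suc j)) =
     (\<Sum>j\<le>i. real (i choose j) * b (i - j) * b (Suc j)) + (\<Sum>j\<le>i. real (i choose Suc j) * b (i - j) * b (Suc j))"
    by (simp add: distrib_right sum.distrib)
  show ?thesis unfolding L B R A by simp
qed

lemma Pq_deriv:
  assumes d: "\<And>j. j \<le> i \<Longrightarrow> ((\<lambda>s. a s j) has_real_derivative b (Suc j)) (at t within X)"
    and e: "\<And>j. j \<le> i \<Longrightarrow> a t j = b j"
  shows "((\<lambda>s. Pq i (a s)) has_real_derivative Pq (Suc i) b) (at t within X)"
proof -
  have "((\<lambda>s. Pq i (a s)) has_real_derivative
      (1/2) * (\<Sum>j\<le>i. real (i choose j) * (b (Suc (i - j)) * a t j + a t (i - j) * b (Suc j)))) (at t within X)"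
  proof -
    have dj: "((\<lambda>s. real (i choose j) * (a s (i - j) * a s j)) has_real_derivative
        real (i choose j) * (b (Suc (i - j)) * a t j + a t (i - j) * b (Suc j))) (at t within X)"
      if "j \<in> {..i}" for j
    proof -
      have "j \<le> i" "i - j \<le> i" using that by auto
      from DERIV_mult'[OF d[OF this(2)] d[OF this(1)]]
      have "((\<lambda>s. a s (i - j) * a s j) has_real_derivative a t (i - j) * b (Suc j) + b (Suc (i - j)) * a t j) (at t within X)" .
      from DERIV_cmult[OF this, of "real (i choose j)"] show ?thesis by (simp add: algebra_simps)
    qed
    have "((\<lambda>s. (1/2) * (\<Sum>j\<le>i. real (i choose j) * (a s (i - j) * a s j))) has_real_derivative
      (1/2) * (\<Sum>j\<le>i. real (i choose j) * (b (Suc (i - j)) * a t j + a t (i - j) * b (Suc j)))) (at t within X)"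
      by (intro DERIV_cmult DERIV_sum dj)
    then show ?thesis by (simp add: Pq_def mult.assoc)
  qed
  moreover have "(\<Sum>j\<le>i. real (i choose j) * (b (Suc (i - j)) * a t j + a t (i - j) * b (Suc j))) =
      (\<Sum>j\<le>i. real (i choose j) * (b (Suc i - j) * b j + b (i - j) * b (Suc j)))"
    by (intro sum.cong refl) (simp add: e Suc_diff_le)
  ultimately show ?thesis by (simp add: Pq_def leibniz)
qed

lemma Pq_0: "Pq 0 c = c 0 * c 0 / 2"
  by (simp add: Pq_def)

lemma Pq_split:
  assumes "1 \<le> i"
  shows "Pq i c = c 0 * c i + (1/2) * (\<Sum>j\<in>{1..i-1}. real (i choose j) * c (i - j) * c j)"
proof -
  obtain m where m: "i = Suc m" using assms by (cases i) auto
  have "(\<Sum>j\<le>Suc m. real (Suc m choose j) * c (Suc m - j) * c j) =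
        c (Suc m) * c 0 + (\<Sum>j\<le>m. real (Suc m choose Suc j) * c (m - j) * c (Suc j))"
    by (subst sum.atMost_Suc_shift) simp
  also have "(\<Sum>j\<le>m. real (Suc m choose Suc j) * c (m - j) * c (Suc j)) =
      (\<Sum>j<m. real (Suc m choose Suc j) * c (m - j) * c (Suc j)) + c 0 * c (Suc m)"
    by (simp add: lessThan_Suc_atMost[symmetric])
  also have "(\<Sum>j<m. real (Suc m choose Suc j) * c (m - j) * c (Suc j)) =
      (\<Sum>j\<in>{1..m}. real (Suc m choose j) * c (Suc m - j) * c j)"
  proof -
    have "{1..m} = Suc ` {..<m}" by (simp add: image_Suc_lessThan)
    then show ?thesis by (simp add: sum.reindex)
  qed
  finally show ?thesis unfolding Pq_def m by (simp add: algebra_simps)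
qed

lemma pair_sum0:
  fixes u :: "real^'m" and v :: "'m \<Rightarrow> real^'n"
  shows "(0::real, \<Sum>j\<in>UNIV. u $ j *\<^sub>R v j) = (\<Sum>j\<in>UNIV. u $ j *\<^sub>R (0::real, v j))"
  by (simp add: prod_eq_iff fst_sum snd_sum)

lemma y_deriv:
  fixes \<psi> :: "real \<Rightarrow> real^'n \<Rightarrow> real" and x :: "real \<Rightarrow> real^'n"
    and f :: "real \<Rightarrow> real^'n \<Rightarrow> real^'n" and g :: "real \<Rightarrow> real^'n \<Rightarrow> real^'m^'n" and u :: "real^'m"
  assumes psi: "(\<lambda>p. \<psi> (fst p) (snd p)) differentiable (at (t, x t) within dom_set t0)"
    and xd: "(x has_vector_derivative (f t (x t) + g t (x t) *v u)) (at t within {t0..T})"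
    and t: "t \<in> {t0..T}"
  shows "((\<lambda>s. \<psi> s (x s)) has_real_derivative (lie_f t0 f \<psi> t (x t) + lie_g t0 g \<psi> t (x t) \<bullet> u)) (at t within {t0..T})"
proof -
  let ?P = "\<lambda>p. \<psi> (fst p) (snd p)"
  let ?D = "frechet_derivative ?P (at (t, x t) within dom_set t0)"
  have bl: "bounded_linear ?D" using fd_works[OF psi] has_derivative_bounded_linear by blast
  have lin: "linear ?D" using bounded_linear.linear[OF bl] .
  have "((\<lambda>s. ?P (s, x s)) has_real_derivative ?D (1, f t (x t) + g t (x t) *v u)) (at t within {t0..T})"
    by (rule chain_pt[OF _ xd t]) (use psi in simp)
  moreover have "?D (1, f t (x t) + g t (x t) *v u) = lie_f t0 f \<psi> t (x t) + lie_g t0 g \<psi> t (x t) \<bullet> u"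
  proof -
    have "(1::real, f t (x t) + g t (x t) *v u) = (1, f t (x t)) + (0, g t (x t) *v u)" by simp
    moreover have "g t (x t) *v u = (\<Sum>j\<in>UNIV. u $ j *\<^sub>R column j (g t (x t)))"
      by (simp add: matrix_mult_sum scalar_mult_eq_scaleR)
    ultimately have "(1::real, f t (x t) + g t (x t) *v u) = (1, f t (x t)) + (\<Sum>j\<in>UNIV. u $ j *\<^sub>R (0::real, column j (g t (x t))))"
      using pair_sum0[of u "\<lambda>j. column j (g t (x t))"] by simp
    then have "?D (1, f t (x t) + g t (x t) *v u) = ?D (1, f t (x t)) + (\<Sum>j\<in>UNIV. u $ j * ?D (0, column j (g t (x t))))"
      using lin by (simp only: linear_add linear_sum linear_scale real_scaleR_def)
    also have "\<dots> = lie_f t0 f \<psi> t (x t) + lie_g t0 g \<psi> t (x t) \<bullet> u"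
      by (simp add: lie_f_def lie_g_def inner_vec_def mult.commute)
    finally show ?thesis .
  qed
  ultimately show ?thesis by simp
qed

lemma omega_row:
  fixes Om :: "real^'m^'m" and y :: "real^'m"
  assumes "invertible Om"
  shows "(Om $ k) \<bullet> (- (matrix_inv Om *v y)) = - (y $ k)"
proof -
  have "Om ** matrix_inv Om = mat 1"
    using assms unfolding invertible_def matrix_inv_def by (rule someI_ex[THEN conjunct1])
  then have "Om *v (matrix_inv Om *v y) = y" by (simp add: matrix_vector_mul_assoc)
  then have "(Om *v (matrix_inv Om *v y)) $ k = y $ k" by simp
  then show ?thesis by (simp add: matrix_vector_mult_def inner_vec_def inner_minus_right sum_negf mult.commute)
qed

theorem mainTheorem3:
  fixes f :: "real \<Rightarrow> real^'n \<Rightarrow> real^'n"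
    and g :: "real \<Rightarrow> real^'n \<Rightarrow> real^'m^'n"
    and \<phi> :: "real \<Rightarrow> real^'n \<Rightarrow> real^'m"
    and \<rho> :: "'m \<Rightarrow> nat"
    and t0 T \<beta> :: real
    and x0 :: "real^'n"
    and \<xi> :: "real \<Rightarrow> real^'m"
    and x :: "real \<Rightarrow> real^'n"
    and zt :: "real \<Rightarrow> 'm \<Rightarrow> nat \<Rightarrow> real"
  assumes f_smooth: "smooth_on (dom_set t0) (\<lambda>p. f (fst p) (snd p))"
    and g_smooth: "smooth_on (dom_set t0) (\<lambda>p. g (fst p) (snd p))"
    and phi_smooth: "smooth_on (dom_set t0) (\<lambda>p. \<phi> (fst p) (snd p))"
    and reldeg: "has_relative_degree t0 f g \<phi> \<rho>"
    and Omega_inv: "\<forall>(t, y) \<in> dom_set t0. invertible (Omega_g t0 f g \<phi> \<rho> t y)"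
    and init_neg: "\<forall>k. \<phi> t0 x0 $ k < 0"
    and beta_pos: "\<beta> > 0"
    and T_gt: "T > t0"
    and xi_meas: "\<xi> measurable_on {t0..T}"
    and sol: "aug_solution t0 T f g \<phi> \<rho> x0 (\<lambda>t. sat \<beta> (\<xi> t)) x zt"
  shows "\<forall>t \<in> {t0..T}. \<forall>k. \<phi> t (x t) $ k \<le> 0"
proof (intro ballI allI)
  fix t k assume t: "t \<in> {t0..T}"
  define r where "r = \<rho> k"
  define \<psi> where "\<psi> = (\<lambda>i. lie_f_iter t0 f i (comp_fun \<phi> k))"
  define u where "u = (\<lambda>s. aug_control t0 f g \<phi> \<rho> s (x s) (zt s) (sat \<beta> (\<xi> s)))"
  define Q where "Q = (\<lambda>i s. \<psi> i s (x s) + Pq i (zt s k))"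
  define c where "c = (\<lambda>s j. if j < r then zt s k j else sat \<beta> (\<xi> s) $ k)"
  have acx: "abs_continuous_on {t0..T} x"
    and acz: "\<And>j. j < r \<Longrightarrow> abs_continuous_on {t0..T} (\<lambda>s. zt s k j)"
    and dx: "AE s in lebesgue. s \<in> {t0..T} \<longrightarrow> (x has_vector_derivative (f s (x s) + g s (x s) *v u s)) (at s within {t0..T})"
    and dz: "\<And>j. j + 1 < r \<Longrightarrow> AE s in lebesgue. s \<in> {t0..T} \<longrightarrow>
          ((\<lambda>v. zt v k j) has_vector_derivative zt s k (j + 1)) (at s within {t0..T})"
    and dzl: "AE s in lebesgue. s \<in> {t0..T} \<longrightarrow>
          ((\<lambda>v. zt v k (r - 1)) has_vector_derivative sat \<beta> (\<xi> s) $ k) (at s within {t0..T})"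
    and xt0: "x t0 = x0"
    and z0: "zt t0 k 0 = sqrt (- 2 * \<phi> t0 x0 $ k)"
    and zi: "\<And>i. 1 \<le> i \<Longrightarrow> i < r \<Longrightarrow> zt t0 k i = - (\<psi> i t0 x0 + S_sum (zt t0) k i) / zt t0 k 0"
    using sol unfolding aug_solution_def u_def r_def \<psi>_def by auto
  have r1: "1 \<le> r" using reldeg by (simp add: has_relative_degree_def r_def)
  have lg0: "lie_g t0 g (\<psi> i) s y = 0" if "i + 2 \<le> r" "t0 \<le> s" for i s y
    using reldeg that unfolding has_relative_degree_def r_def \<psi>_def dom_set_def by auto
  have phiC: "Ck n (dom_set t0) (\<lambda>p. comp_fun \<phi> k (fst p) (snd p))" for n
    using Ck_linear[OF ud_dom bounded_linear_vec_nth Ck_smooth[OF phi_smooth], of n k]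
    by (simp add: comp_fun_def)
  have fC: "Ck n (dom_set t0) (\<lambda>p. f (fst p) (snd p) $ j)" for n j
    using Ck_linear[OF ud_dom bounded_linear_vec_nth Ck_smooth[OF f_smooth], of n j] by simp
  have psiC: "Ck n (dom_set t0) (\<lambda>p. \<psi> i (fst p) (snd p))" for n i
    unfolding \<psi>_def by (rule Ck_lie_iter[OF phiC fC])
  have psidiff: "(\<lambda>p. \<psi> i (fst p) (snd p)) differentiable (at (s, y) within dom_set t0)" if "t0 \<le> s" for i s y
    using psiC[of "Suc 0" i] that by (auto simp: dom_set_def)
  have psiSuc: "\<psi> (Suc i) = lie_f t0 f (\<psi> i)" for i by (simp add: \<psi>_def lie_f_iter_def)
  have psi0: "\<psi> 0 s y = \<phi> s y $ k" for s y by (simp add: \<psi>_def lie_f_iter_def comp_fun_def)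
  have inv: "invertible (Omega_g t0 f g \<phi> \<rho> s y)" if "t0 \<le> s" for s y
    using Omega_inv that by (auto simp: dom_set_def)
  have acQ: "abs_continuous_on {t0..T} (Q i)" if "i < r" for i
  proof -
    have "abs_continuous_on {t0..T} (\<lambda>s. (\<lambda>p. \<psi> i (fst p) (snd p)) (s, x s))"
      by (rule ac_comp[OF psiC acx])
    then have a1: "abs_continuous_on {t0..T} (\<lambda>s. \<psi> i s (x s))" by simp
    have "abs_continuous_on {t0..T} (\<lambda>s. (1/2) * (\<Sum>j\<le>i. real (i choose j) * zt s k (i - j) * zt s k j))"
    proof (rule ac_mult[OF ac_const], rule ac_sum)
      fix j assume "j \<in> {..i}"
      then have "i - j < r" "j < r" using that by auto
      then show "abs_continuous_on {t0..T} (\<lambda>s. real (i choose j) * zt s k (i - j) * zt s k j)"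
        by (intro ac_mult ac_const acz)
    qed
    then have a2: "abs_continuous_on {t0..T} (\<lambda>s. Pq i (zt s k))" by (simp add: Pq_def)
    show ?thesis unfolding Q_def by (rule ac_add[OF a1 a2])
  qed
  have zpos: "zt t0 k 0 > 0" using init_neg z0 by simp
  have Q0: "Q i t0 = 0" if "i < r" for i
  proof (cases "i = 0")
    case True
    have "zt t0 k 0 * zt t0 k 0 = - 2 * \<phi> t0 x0 $ k"
    proof -
      have "0 \<le> - 2 * \<phi> t0 x0 $ k" using init_neg[rule_format, of k] by simp
      then show ?thesis by (simp add: z0)
    qed
    then show ?thesis using True by (simp add: Q_def psi0 Pq_0 xt0)
  next
    case False
    then have i1: "1 \<le> i" by simp
    have "Pq i (zt t0 k) = zt t0 k 0 * zt t0 k i + S_sum (zt t0) k i"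
      by (simp add: Pq_split[OF i1] S_sum_def)
    also have "zt t0 k 0 * zt t0 k i = - (\<psi> i t0 x0 + S_sum (zt t0) k i)"
      using zi[OF i1 that] zpos by simp
    finally show ?thesis by (simp add: Q_def xt0)
  qed
  have dzall: "AE s in lebesgue. \<forall>j\<in>{..<r}. j + 1 < r \<longrightarrow> (s \<in> {t0..T} \<longrightarrow>
          ((\<lambda>v. zt v k j) has_vector_derivative zt s k (j + 1)) (at s within {t0..T}))"
  proof (rule AE_finite_allI)
    fix j assume "j \<in> {..<r}"
    show "AE s in lebesgue. j + 1 < r \<longrightarrow> (s \<in> {t0..T} \<longrightarrow>
          ((\<lambda>v. zt v k j) has_vector_derivative zt s k (j + 1)) (at s within {t0..T}))"
      by (cases "j + 1 < r") (use dz in auto)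
  qed simp
  have Qder: "((Q i) has_real_derivative (if i + 1 < r then Q (Suc i) s else 0)) (at s within {t0..T})"
    if i: "i < r" and s: "s \<in> {t0..T}"
      and xd: "(x has_vector_derivative (f s (x s) + g s (x s) *v u s)) (at s within {t0..T})"
      and zd: "\<forall>j\<in>{..<r}. j + 1 < r \<longrightarrow> (s \<in> {t0..T} \<longrightarrow>
          ((\<lambda>v. zt v k j) has_vector_derivative zt s k (j + 1)) (at s within {t0..T}))"
      and zl: "((\<lambda>v. zt v k (r - 1)) has_vector_derivative sat \<beta> (\<xi> s) $ k) (at s within {t0..T})"
    for i s
  proof -
    have s0: "t0 \<le> s" using s by simp
    have dy: "((\<lambda>v. \<psi> i v (x v)) has_real_derivative (lie_f t0 f (\<psi> i) s (x s) + lie_g t0 g (\<psi> i) s (x s) \<bullet> u s)) (at s within {t0..T})"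
      by (rule y_deriv[where \<psi>="\<psi> i" and x=x and t=s and t0=t0 and f=f and g=g and u="u s", OF psidiff[OF s0] xd s])
    have dP: "((\<lambda>v. Pq i (zt v k)) has_real_derivative Pq (Suc i) (c s)) (at s within {t0..T})"
    proof (rule Pq_deriv)
      fix j assume j: "j \<le> i"
      show "zt s k j = c s j" using j i by (simp add: c_def)
      show "((\<lambda>v. zt v k j) has_real_derivative c s (Suc j)) (at s within {t0..T})"
      proof (cases "j + 1 < r")
        case True
        then have "((\<lambda>v. zt v k j) has_vector_derivative zt s k (j + 1)) (at s within {t0..T})"
          using zd s j i by auto
        then show ?thesis using True by (simp add: c_def has_real_derivative_iff_has_vector_derivative)
      next
        case False
        then have "j = r - 1" using j i by simp
        then show ?thesis using zl False by (simp add: c_def has_real_derivative_iff_has_vector_derivative)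
      qed
    qed
    have dQ: "((Q i) has_real_derivative (lie_f t0 f (\<psi> i) s (x s) + lie_g t0 g (\<psi> i) s (x s) \<bullet> u s) + Pq (Suc i) (c s)) (at s within {t0..T})"
      unfolding Q_def by (rule DERIV_add[OF dy dP])
    show ?thesis
    proof (cases "i + 1 < r")
      case True
      have "lie_g t0 g (\<psi> i) s (x s) = 0" using lg0[OF _ s0] True by simp
      moreover have "Pq (Suc i) (c s) = Pq (Suc i) (zt s k)"
        unfolding Pq_def using True by (intro arg_cong[where f = "\<lambda>z. (1/2) * z"] sum.cong refl) (auto simp: c_def)
      ultimately show ?thesis using dQ True by (simp add: Q_def psiSuc)
    next
      case False
      then have ir: "i = r - 1" "Suc i = r" using i by auto
      have lg: "lie_g t0 g (\<psi> i) s (x s) = Omega_g t0 f g \<phi> \<rho> s (x s) $ k"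
        by (simp add: Omega_g_def \<psi>_def r_def ir(1))
      have "lie_g t0 g (\<psi> i) s (x s) \<bullet> u s = - ((Omega_f t0 f \<phi> \<rho> s (x s) (zt s) + D_mult (zt s) (sat \<beta> (\<xi> s))) $ k)"
        unfolding lg u_def aug_control_def by (rule omega_row[OF inv[OF s0]])
      also have "\<dots> = - (S_sum (zt s) k r + \<psi> r s (x s) + zt s k 0 * sat \<beta> (\<xi> s) $ k)"
        by (simp add: Omega_f_def D_mult_def \<psi>_def r_def)
      finally have A: "lie_g t0 g (\<psi> i) s (x s) \<bullet> u s = - (S_sum (zt s) k r + \<psi> r s (x s) + zt s k 0 * sat \<beta> (\<xi> s) $ k)" .
      have B: "lie_f t0 f (\<psi> i) s (x s) = \<psi> r s (x s)" using psiSuc[of i] ir by simp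
      have C: "Pq (Suc i) (c s) = zt s k 0 * sat \<beta> (\<xi> s) $ k + S_sum (zt s) k r"
      proof -
        have "Pq r (c s) = c s 0 * c s r + (1/2) * (\<Sum>j\<in>{1..r-1}. real (r choose j) * c s (r - j) * c s j)"
          by (rule Pq_split[OF r1])
        also have "(\<Sum>j\<in>{1..r-1}. real (r choose j) * c s (r - j) * c s j) = (\<Sum>j\<in>{1..r-1}. real (r choose j) * zt s k (r - j) * zt s k j)"
          by (intro sum.cong refl) (auto simp: c_def)
        finally show ?thesis using r1 ir by (simp add: c_def S_sum_def)
      qed
      show ?thesis using dQ False A B C by simp
    qed
  qed
  have AEd: "AE s in lebesgue. s \<in> {t0..T} \<longrightarrow> ((Q i) has_vector_derivative (if i + 1 < r then Q (Suc i) s else 0)) (at s within {t0..T})"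
    if "i < r" for i
    using dx dzall dzl
  proof (eventually_elim)
    case (elim s)
    show ?case
    proof
      assume s: "s \<in> {t0..T}"
      show "((Q i) has_vector_derivative (if i + 1 < r then Q (Suc i) s else 0)) (at s within {t0..T})"
        using Qder[OF that s] elim s by (simp add: has_real_derivative_iff_has_vector_derivative)
    qed
  qed
  have down: "\<forall>s\<in>{t0..T}. Q (r - 1 - m) s = 0" if "m < r" for m
    using that
  proof (induction m)
    case 0
    have "r - 1 < r" "\<not> (r - 1 + 1 < r)" using r1 by auto
    have AE0: "AE s in lebesgue. s \<in> {t0..T} \<longrightarrow> ((Q (r - 1)) has_vector_derivative 0) (at s within {t0..T})"
      using AEd[OF \<open>r - 1 < r\<close>] \<open>\<not> (r - 1 + 1 < r)\<close> by simp
    show ?case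
    proof
      fix s assume s: "s \<in> {t0..T}"
      have "Q (r - 1) s = Q (r - 1) t0" by (rule ac_deriv0_const[OF acQ[OF \<open>r - 1 < r\<close>] AE0 s])
      then show "Q (r - 1 - 0) s = 0" using Q0[OF \<open>r - 1 < r\<close>] by simp
    qed
  next
    case (Suc m)
    define i where "i = r - 1 - Suc m"
    have ir: "i < r" "i + 1 < r" "Suc i = r - 1 - m" using Suc.prems by (auto simp: i_def)
    have IH: "\<forall>s\<in>{t0..T}. Q (Suc i) s = 0" using Suc.IH Suc.prems ir(3) by simp
    have AE0: "AE s in lebesgue. s \<in> {t0..T} \<longrightarrow> ((Q i) has_vector_derivative 0) (at s within {t0..T})"
      using AEd[OF ir(1)]
    proof (eventually_elim)
      case (elim s)
      then show ?case using IH ir(2) by auto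
    qed
    show ?case
    proof
      fix s assume s: "s \<in> {t0..T}"
      have "Q i s = Q i t0" by (rule ac_deriv0_const[OF acQ[OF ir(1)] AE0 s])
      then show "Q (r - 1 - Suc m) s = 0" using Q0[OF ir(1)] by (simp add: i_def)
    qed
  qed
  have "Q 0 t = 0" using down[of "r - 1"] r1 t by simp
  then have "\<phi> t (x t) $ k = - (zt t k 0 * zt t k 0 / 2)" by (simp add: Q_def psi0 Pq_0)
  then show "\<phi> t (x t) $ k \<le> 0" by simp
qed

end
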